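(* Let $\mathbb{F}$ be a field, $n,d$ positive integers, and $P_n=\mathbb{F}[x_1,\dots,x_n]$. For $k\ge 3$ let $D_k$ be the set of monomials of degree $k$ in $x_1,\dots,x_{k-1}$ not divisible by $x_{k-1}^2$ (if $n<k-1$, $D_k$ is the set of all monomials of degree $k$ in $x_1,\dots,x_n$); let $K_n\subseteq P_n$ be the ideal generated by $x_1^3,\dots,x_n^3$ and $\bigcup_{k=3}^{n+1}D_k$, and let $K_{n,d}\subseteq P_n$ be the ideal generated by those of these generators of $K_n$ that have degree $\le d$. Let $\mu\in P_n$ be a monomial of degree $d-1$ which does not end in $x_{d-2}^2$, and assume $\mu\notin K_n$. Then there exists a monomial $M$ which is a multiple of $\mu$, has degree $2n-d+2$, and satisfies $M\notin K_{n,d}$.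
   Context: A monomial $m$ is said to end in $x_j^{e}$ if $m=x_1^{a_1}\cdots x_{j-1}^{a_{j-1}}x_j^{e}$, i.e. $m$ involves no variable $x_i$ with $i>j$ and the exponent of $x_j$ in $m$ is $e$. *)

theory Defs
  imports "HOL-Library.Poly_Mapping"
begin

text \<open>Multivariate polynomials over a field: exponent vectors (monomials) are
  finitely supported maps nat \<Rightarrow>0 nat (variable x_i has index i, i \<ge> 1);
  polynomials are finitely supported maps from monomials to coefficients,
  with the convolution ring structure of Poly_Mapping.\<close>

type_synonym mon = "nat \<Rightarrow>\<^sub>0 nat"
type_synonym 'a mpoly = "mon \<Rightarrow>\<^sub>0 'a"

definition mdeg :: "mon \<Rightarrow> nat" where
  "mdeg m = (\<Sum>i\<in>Poly_Mapping.keys m. Poly_Mapping.lookup m i)"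

definition mon_in :: "nat \<Rightarrow> mon \<Rightarrow> bool" where
  "mon_in n m \<longleftrightarrow> Poly_Mapping.keys m \<subseteq> {1..n}"

definition mpoly_of :: "mon \<Rightarrow> 'a::field mpoly" where
  "mpoly_of m = Poly_Mapping.single m 1"

definition Pn :: "nat \<Rightarrow> 'a::field mpoly set" where
  "Pn n = {p. \<forall>m\<in>Poly_Mapping.keys p. mon_in n m}"

definition ideal_gen :: "nat \<Rightarrow> 'a::field mpoly set \<Rightarrow> 'a mpoly set" where
  "ideal_gen n G = {p. \<exists>S c. finite S \<and> S \<subseteq> G \<and> (\<forall>g\<in>S. c g \<in> Pn n) \<and>
                          p = (\<Sum>g\<in>S. c g * g)}"

definition ends_in :: "mon \<Rightarrow> nat \<Rightarrow> nat \<Rightarrow> bool" where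
  "ends_in m j e \<longleftrightarrow> (\<forall>i>j. Poly_Mapping.lookup m i = 0) \<and> Poly_Mapping.lookup m j = e"

definition xpow :: "nat \<Rightarrow> nat \<Rightarrow> mon" where
  "xpow i e = Poly_Mapping.single i e"

text \<open>D_k for k \<ge> 3: monomials of degree k in x_1..x_{k-1} not divisible by x_{k-1}^2
  (the n < k-1 case never arises for 3 \<le> k \<le> n+1)\<close>
definition Dk :: "nat \<Rightarrow> mon set" where
  "Dk k = {m. mdeg m = k \<and> mon_in (k - 1) m \<and> Poly_Mapping.lookup m (k - 1) < 2}"

definition Kgens :: "nat \<Rightarrow> mon set" where
  "Kgens n = {xpow i 3 | i. 1 \<le> i \<and> i \<le> n} \<union> (\<Union>k\<in>{3..n+1}. Dk k)"

definition Kn :: "nat \<Rightarrow> 'a::field mpoly set" where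
  "Kn n = ideal_gen n (mpoly_of ` Kgens n)"

definition Knd :: "nat \<Rightarrow> nat \<Rightarrow> 'a::field mpoly set" where
  "Knd n d = ideal_gen n (mpoly_of ` {m \<in> Kgens n. mdeg m \<le> d})"

end

theory Submission imports Defs begin

lemma mdeg_sum: "Poly_Mapping.keys m \<subseteq> A \<Longrightarrow> finite A \<Longrightarrow> mdeg m = sum (Poly_Mapping.lookup m) A"
  unfolding mdeg_def
  by (rule sum.mono_neutral_left) (auto simp: in_keys_iff)

lemma mult_single_zero:
  assumes "\<forall>l. M \<noteq> l + h"
  shows "Poly_Mapping.lookup (c * Poly_Mapping.single h (1::'a::field)) M = 0"
proof -
  have "\<And>l q. (Poly_Mapping.lookup (Poly_Mapping.single h (1::'a)) q when M = l + q) = 0"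
    using assms by (auto simp: lookup_single when_def)
  then show ?thesis by (simp add: lookup_mult)
qed

lemma ideal_mem_div:
  assumes "(mpoly_of M :: 'a::field mpoly) \<in> ideal_gen n (mpoly_of ` G)"
  shows "\<exists>g\<in>G. \<forall>i. Poly_Mapping.lookup g i \<le> Poly_Mapping.lookup M i"
proof (rule ccontr)
  assume no: "\<not> ?thesis"
  obtain S c where S: "finite S" "S \<subseteq> mpoly_of ` G"
    and p: "(mpoly_of M :: 'a mpoly) = (\<Sum>g\<in>S. c g * g)"
    using assms unfolding ideal_gen_def by blast
  have "Poly_Mapping.lookup (c p * p) M = 0" if pS: "p \<in> S" for p
  proof -
    obtain h where h: "h \<in> G" "p = mpoly_of h" using S pS by blast
    obtain i where i: "Poly_Mapping.lookup h i > Poly_Mapping.lookup M i" using no h by (meson not_le)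
    have "\<forall>l. M \<noteq> l + h"
    proof
      fix l show "M \<noteq> l + h" using i by (auto simp: lookup_add)
    qed
    then show ?thesis using h mult_single_zero by (simp add: mpoly_of_def)
  qed
  then have "Poly_Mapping.lookup (mpoly_of M :: 'a mpoly) M = 0"
    by (simp add: p lookup_sum)
  then show False by (simp add: mpoly_of_def)
qed

lemma div_ideal_mem:
  assumes "mon_in n M" "g \<in> G" "\<forall>i. Poly_Mapping.lookup g i \<le> Poly_Mapping.lookup M i"
  shows "(mpoly_of M :: 'a::field mpoly) \<in> ideal_gen n (mpoly_of ` G)"
proof -
  have eq: "(M - g) + g = M"
  proof (rule poly_mapping_eqI)
    fix k
    have "Poly_Mapping.lookup g k \<le> Poly_Mapping.lookup M k" using assms(3) by blast
    then show "Poly_Mapping.lookup (M - g + g) k = Poly_Mapping.lookup M k"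
      by (simp only: lookup_add lookup_minus)
  qed
  have ks: "Poly_Mapping.keys (M - g) \<subseteq> Poly_Mapping.keys M"
    by (auto simp: in_keys_iff lookup_minus)
  have "(mpoly_of (M - g) :: 'a mpoly) * mpoly_of g = mpoly_of M"
    unfolding mpoly_of_def mult_single eq by simp
  then have "(mpoly_of M :: 'a mpoly) = (\<Sum>p\<in>{mpoly_of g}. (\<lambda>_. mpoly_of (M - g)) p * p)"
    by simp
  moreover have "(mpoly_of (M - g) :: 'a mpoly) \<in> Pn n"
    using assms(1) ks by (auto simp: Pn_def mpoly_of_def mon_in_def)
  moreover have "{mpoly_of g} \<subseteq> (mpoly_of ` G :: 'a mpoly set)" using assms(2) by blast
  ultimately show ?thesis unfolding ideal_gen_def
    by (intro CollectI exI[of _ "{mpoly_of g}"] exI[of _ "\<lambda>_. mpoly_of (M - g)"]) auto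
qed

definition Cn :: "(nat \<Rightarrow> nat) \<Rightarrow> nat \<Rightarrow> bool" where
  "Cn f j \<longleftrightarrow> sum f {1..<j} + min (f j) 1 \<le> j"

lemma Cn_cong: "1 \<le> j \<Longrightarrow> (\<And>i. 1 \<le> i \<Longrightarrow> i \<le> j \<Longrightarrow> f i = g i) \<Longrightarrow> Cn f j = Cn g j"
proof -
  assume j: "1 \<le> j" and h: "\<And>i. 1 \<le> i \<Longrightarrow> i \<le> j \<Longrightarrow> f i = g i"
  have "sum f {1..<j} = sum g {1..<j}" by (rule sum.cong) (auto intro: h)
  moreover have "f j = g j" using h j by auto
  ultimately show ?thesis unfolding Cn_def by auto
qed

lemma submon:
  assumes "finite A" "k \<le> sum f A"
  shows "\<exists>g. (\<forall>i. g i \<le> f i) \<and> (\<forall>i. i \<notin> A \<longrightarrow> g i = 0) \<and> sum g A = (k::nat)"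
  using assms
proof (induction A arbitrary: k rule: finite_induct)
  case empty
  then show ?case by (intro exI[of _ "\<lambda>_. 0"]) auto
next
  case (insert a A)
  show ?case
  proof (cases "k \<le> sum f A")
    case True
    then obtain g where g: "\<forall>i. g i \<le> f i" "\<forall>i. i \<notin> A \<longrightarrow> g i = 0" "sum g A = k"
      using insert.IH by blast
    then show ?thesis using insert.hyps by (intro exI[of _ g]) auto
  next
    case False
    define g where "g = (\<lambda>i. if i \<in> A then f i else if i = a then k - sum f A else 0)"
    have "sum g A = sum f A" unfolding g_def by (rule sum.cong) auto
    moreover have "g a = k - sum f A" using insert.hyps unfolding g_def by auto
    ultimately have "sum g (insert a A) = k" using insert.hyps False by simp
    moreover have "\<forall>i. g i \<le> f i" using insert.prems insert.hyps False unfolding g_def by auto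
    moreover have "\<forall>i. i \<notin> insert a A \<longrightarrow> g i = 0" unfolding g_def by auto
    ultimately show ?thesis by blast
  qed
qed

lemma extend:
  "(\<forall>i. \<nu> i \<le> 2) \<Longrightarrow> (\<forall>i. i \<notin> {1..m} \<longrightarrow> \<nu> i = 0) \<Longrightarrow> (\<forall>j\<in>{1..m}. Cn \<nu> j) \<Longrightarrow>
   sum \<nu> {1..m} \<le> t \<Longrightarrow> t \<le> m \<Longrightarrow>
   \<exists>N. (\<forall>i. \<nu> i \<le> N i) \<and> (\<forall>i. N i \<le> 2) \<and> (\<forall>i. i \<notin> {1..m} \<longrightarrow> N i = 0) \<and>
       (\<forall>j\<in>{1..m}. Cn N j) \<and> sum N {1..m} = t"
proof (induction m arbitrary: \<nu> t)
  case 0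
  then show ?case by (intro exI[of _ \<nu>]) auto
next
  case (Suc m)
  define S where "S = sum \<nu> {1..m}"
  have split: "\<And>f. sum f {1..Suc m} = sum f {1..m} + f (Suc m)" by simp
  have ivl: "{1..<Suc m} = {1..m}" by auto
  have "Cn \<nu> (Suc m)" using Suc.prems(3) by auto
  then have CS: "S + min (\<nu> (Suc m)) 1 \<le> Suc m"
    unfolding Cn_def S_def ivl by auto
  have tot: "S + \<nu> (Suc m) \<le> t" using Suc.prems(4) split unfolding S_def by metis
  show ?case
  proof (cases "S = Suc m")
    case True
    then have "\<nu> (Suc m) = 0" "t = Suc m" using tot Suc.prems(5) by auto
    then show ?thesis using Suc.prems True split[of \<nu>] unfolding S_def by (intro exI[of _ \<nu>]) auto
  next
    case False
    then have Sm: "S \<le> m" using CS tot Suc.prems(5) by auto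
    define \<nu>0 where "\<nu>0 = \<nu>(Suc m := 0)"
    define t0 where "t0 = max S (t - 2)"
    have a1: "\<forall>i. \<nu>0 i \<le> 2" using Suc.prems(1) unfolding \<nu>0_def by auto
    have a2: "\<forall>i. i \<notin> {1..m} \<longrightarrow> \<nu>0 i = 0" using Suc.prems(2) unfolding \<nu>0_def by auto
    have a3: "\<forall>j\<in>{1..m}. Cn \<nu>0 j"
    proof
      fix j assume j: "j \<in> {1..m}"
      have "Cn \<nu>0 j = Cn \<nu> j" by (rule Cn_cong) (use j in \<open>auto simp: \<nu>0_def\<close>)
      then show "Cn \<nu>0 j" using Suc.prems(3) j by auto
    qed
    have s0: "sum \<nu>0 {1..m} = S" unfolding S_def \<nu>0_def by (rule sum.cong) auto
    have a4: "sum \<nu>0 {1..m} \<le> t0" using s0 unfolding t0_def by auto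
    have a5: "t0 \<le> m" using Sm Suc.prems(5) unfolding t0_def by auto
    obtain N0 where N0: "\<forall>i. \<nu>0 i \<le> N0 i" "\<forall>i. N0 i \<le> 2" "\<forall>i. i \<notin> {1..m} \<longrightarrow> N0 i = 0"
        "\<forall>j\<in>{1..m}. Cn N0 j" "sum N0 {1..m} = t0"
      using Suc.IH[OF a1 a2 a3 a4 a5] by blast
    define N where "N = N0(Suc m := t - t0)"
    have le2: "t - t0 \<le> 2" "\<nu> (Suc m) \<le> t - t0" "t0 \<le> t"
      using tot spec[OF Suc.prems(1), of "Suc m"] unfolding t0_def by (auto simp: max_def)
    have b1: "\<forall>i. \<nu> i \<le> N i" using N0(1) le2 unfolding N_def \<nu>0_def
      by (metis fun_upd_apply)
    have b2: "\<forall>i. N i \<le> 2" using N0(2) le2 unfolding N_def by auto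
    have b3: "\<forall>i. i \<notin> {1..Suc m} \<longrightarrow> N i = 0" using N0(3) unfolding N_def by auto
    have sN: "sum N {1..m} = t0" using N0(5) unfolding N_def by (metis (no_types, lifting) sum.cong atLeastAtMost_iff fun_upd_apply n_not_Suc_n le_SucI Suc_n_not_le_n)
    have b4: "\<forall>j\<in>{1..Suc m}. Cn N j"
    proof
      fix j assume j: "j \<in> {1..Suc m}"
      show "Cn N j"
      proof (cases "j = Suc m")
        case True
        then have "sum N {1..<j} = t0" using sN ivl by simp
        moreover have "min (N j) 1 \<le> 1" by simp
        ultimately show ?thesis using a5 True unfolding Cn_def by linarith
      next
        case False
        then have jm: "j \<in> {1..m}" using j by auto
        have "Cn N j = Cn N0 j" by (rule Cn_cong) (use j jm in \<open>auto simp: N_def\<close>)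
        then show ?thesis using N0(4) jm by auto
      qed
    qed
    have b5: "sum N {1..Suc m} = t" using split[of N] sN le2 unfolding N_def by simp
    show ?thesis using b1 b2 b3 b4 b5 by blast
  qed
qed

lemma sum_last: "1 \<le> (j::nat) \<Longrightarrow> sum f {1..j} = sum f {1..<j} + (f j :: nat)"
  by (subst atLeastLessThanSuc_atLeastAtMost[symmetric]) (simp add: sum.atLeastLessThan_Suc)

lemma split_sum: "m \<le> n \<Longrightarrow> sum (f::nat\<Rightarrow>nat) {1..n} = sum f {1..m} + sum f {Suc m..n}"
proof -
  assume "m \<le> n"
  then have "{1..n} = {1..m} \<union> {Suc m..n}" by auto
  then show ?thesis by (simp add: sum.union_disjoint)
qed

lemma lookup_Abs_fin:
  assumes "\<And>i. i \<notin> {1..(n::nat)} \<Longrightarrow> F i = (0::nat)"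
  shows "Poly_Mapping.lookup (Abs_poly_mapping F) = F"
proof -
  have "{x. F x \<noteq> 0} \<subseteq> {1..n}"
  proof
    fix x assume "x \<in> {x. F x \<noteq> 0}"
    then have "F x \<noteq> 0" by simp
    then show "x \<in> {1..n}" using assms[of x] by argo
  qed
  then have "finite {x. F x \<noteq> 0}" by (rule finite_subset) simp
  then show ?thesis by (rule lookup_Abs_poly_mapping)
qed

lemma keys_sub: "(\<And>i. i \<notin> A \<Longrightarrow> Poly_Mapping.lookup M i = 0) \<Longrightarrow> Poly_Mapping.keys M \<subseteq> A"
  by (auto simp: in_keys_iff)

lemma mdeg_xpow: "mdeg (xpow i e) = e"
  by (cases "e = 0") (simp_all add: mdeg_def xpow_def)

lemma notKnd:
  assumes "mon_in n M" "3 \<le> d \<Longrightarrow> \<forall>i. Poly_Mapping.lookup M i \<le> 2"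
    "\<And>j. 2 \<le> j \<Longrightarrow> j \<le> d - 1 \<Longrightarrow> Cn (Poly_Mapping.lookup M) j"
  shows "(mpoly_of M :: 'a::field mpoly) \<notin> Knd n d"
proof
  assume "(mpoly_of M :: 'a::field mpoly) \<in> Knd n d"
  then have "(mpoly_of M :: 'a::field mpoly) \<in> ideal_gen n (mpoly_of ` {m \<in> Kgens n. mdeg m \<le> d})"
    unfolding Knd_def .
  then have "\<exists>g\<in>{m \<in> Kgens n. mdeg m \<le> d}. \<forall>i. Poly_Mapping.lookup g i \<le> Poly_Mapping.lookup M i"
    by (rule ideal_mem_div)
  then obtain g where g: "g \<in> Kgens n" "mdeg g \<le> d" "\<forall>i. Poly_Mapping.lookup g i \<le> Poly_Mapping.lookup M i"
    by blast
  show False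
  proof (cases "g \<in> {xpow i 3 | i. 1 \<le> i \<and> i \<le> n}")
    case True
    then obtain i where i: "g = xpow i 3" by blast
    then have "3 \<le> d" using g(2) mdeg_xpow[of i 3] by simp
    then have "Poly_Mapping.lookup M i \<le> 2" using assms(2) by blast
    moreover have "Poly_Mapping.lookup g i = 3" using i by (simp add: xpow_def)
    moreover have "Poly_Mapping.lookup g i \<le> Poly_Mapping.lookup M i" using g(3) by blast
    ultimately show False by linarith
  next
    case False
    then obtain k where k: "k \<in> {3..n+1}" "g \<in> Dk k" using g(1) unfolding Kgens_def by blast
    define j where "j = k - 1"
    have j: "2 \<le> j" "k = Suc j" using k(1) unfolding j_def by auto
    have gk: "mdeg g = k" "mon_in j g" "Poly_Mapping.lookup g j < 2" using k(2) unfolding Dk_def j_def by auto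
    have jd: "j \<le> d - 1" using gk(1) g(2) j by auto
    have C: "Cn (Poly_Mapping.lookup M) j" using assms(3) j jd by blast
    have "mdeg g = sum (Poly_Mapping.lookup g) {1..j}"
      using gk(2) unfolding mon_in_def by (rule mdeg_sum) simp
    also have "\<dots> = sum (Poly_Mapping.lookup g) {1..<j} + Poly_Mapping.lookup g j"
      using j by (intro sum_last) simp
    also have "\<dots> \<le> sum (Poly_Mapping.lookup M) {1..<j} + min (Poly_Mapping.lookup M j) 1"
    proof (rule add_mono)
      show "sum (Poly_Mapping.lookup g) {1..<j} \<le> sum (Poly_Mapping.lookup M) {1..<j}"
        using g(3) by (simp add: sum_mono)
      show "Poly_Mapping.lookup g j \<le> min (Poly_Mapping.lookup M j) 1"
        using spec[OF g(3), of j] gk(3) by linarith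
    qed
    also have "\<dots> \<le> j" using C unfolding Cn_def .
    finally show False using gk(1) j by simp
  qed
qed

theorem mainTheorem12:
  fixes n d :: nat and \<mu> :: mon
  assumes "n > 0" and "d > 0"
    and "mon_in n \<mu>" and "mdeg \<mu> = d - 1"
    and "\<not> ends_in \<mu> (d - 2) 2"
    and "(mpoly_of \<mu> :: 'a::field mpoly) \<notin> Kn n"
  shows "\<exists>M. mon_in n M \<and> (\<exists>m'. M = \<mu> + m') \<and>
             int (mdeg M) = 2 * int n - int d + 2 \<and>
             (mpoly_of M :: 'a mpoly) \<notin> Knd n d"
proof -
  define f where "f = Poly_Mapping.lookup \<mu>"
  have fsupp: "\<And>i. i \<notin> {1..n} \<Longrightarrow> f i = 0"
    using assms(3) unfolding mon_in_def f_def by (auto simp: in_keys_iff)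
  have deg: "sum f {1..n} = d - 1"
    using assms(4) assms(3) unfolding f_def mon_in_def by (metis finite_atLeastAtMost mdeg_sum)
  have f2: "\<And>i. f i \<le> 2"
  proof (rule ccontr)
    fix i assume "\<not> f i \<le> 2"
    then have fi: "f i \<ge> 3" by simp
    then have i: "1 \<le> i" "i \<le> n" using fsupp[of i] by (auto split: if_splits)
    have "xpow i 3 \<in> Kgens n" using i unfolding Kgens_def by blast
    moreover have "\<forall>k. Poly_Mapping.lookup (xpow i 3) k \<le> Poly_Mapping.lookup \<mu> k"
      using fi unfolding xpow_def f_def by (auto simp: lookup_single when_def)
    ultimately have "(mpoly_of \<mu> :: 'a mpoly) \<in> Kn n"
      unfolding Kn_def using assms(3) by (intro div_ideal_mem)
    then show False using assms(6) by blast
  qed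
  have fC: "\<And>j. j \<in> {1..n} \<Longrightarrow> Cn f j"
  proof -
    fix j assume j: "j \<in> {1..n}"
    show "Cn f j"
    proof (cases "j = 1")
      case True
      then show ?thesis unfolding Cn_def by simp
    next
      case False
      then have j2: "2 \<le> j" "j \<le> n" using j by auto
      show ?thesis
      proof (rule ccontr)
        assume nC: "\<not> Cn f j"
        define h where "h = (\<lambda>i. if 1 \<le> i \<and> i < j then f i else if i = j then min (f j) 1 else 0)"
        have "sum h {1..j} = sum h {1..<j} + h j" using j2 by (intro sum_last) simp
        also have "sum h {1..<j} = sum f {1..<j}" unfolding h_def by (rule sum.cong) auto
        finally have "sum h {1..j} = sum f {1..<j} + min (f j) 1" unfolding h_def by simp
        then have "Suc j \<le> sum h {1..j}" using nC unfolding Cn_def by simp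
        then obtain g where g: "\<forall>i. g i \<le> h i" "\<forall>i. i \<notin> {1..j} \<longrightarrow> g i = 0" "sum g {1..j} = Suc j"
          using submon[of "{1..j}" "Suc j" h] by auto
        define G where "G = Abs_poly_mapping g"
        have lG: "Poly_Mapping.lookup G = g" unfolding G_def
          by (rule lookup_Abs_fin[of j]) (use g(2) in blast)
        have kG: "Poly_Mapping.keys G \<subseteq> {1..j}" by (rule keys_sub) (use g(2) lG in auto)
        have "mdeg G = Suc j" using mdeg_sum[OF kG] g(3) lG by simp
        moreover have "mon_in (Suc j - 1) G" using kG unfolding mon_in_def by simp
        moreover have "Poly_Mapping.lookup G (Suc j - 1) < 2"
        proof -
          have "h j \<le> 1" unfolding h_def by simp
          moreover have "g j \<le> h j" using g(1) by blast
          ultimately show ?thesis using lG by simp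
        qed
        ultimately have "G \<in> Dk (Suc j)" unfolding Dk_def by blast
        then have "G \<in> Kgens n" unfolding Kgens_def using j2 by auto
        moreover have "\<forall>k. Poly_Mapping.lookup G k \<le> Poly_Mapping.lookup \<mu> k"
        proof
          fix k
          have "h k \<le> f k" unfolding h_def by auto
          then show "Poly_Mapping.lookup G k \<le> Poly_Mapping.lookup \<mu> k"
            using g(1) lG unfolding f_def by (metis order.trans)
        qed
        ultimately have "(mpoly_of \<mu> :: 'a mpoly) \<in> Kn n"
          unfolding Kn_def using assms(3) by (intro div_ideal_mem)
        then show False using assms(6) by blast
      qed
    qed
  qed
  show ?thesis
  proof (cases "d \<le> 2")
    case True
    define e where "e = 2 * n + 2 - d - (d - 1)"
    define M where "M = \<mu> + xpow 1 e"
    have lM: "\<And>i. Poly_Mapping.lookup M i = f i + (if i = 1 then e else 0)"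
      unfolding M_def f_def xpow_def by (simp add: lookup_add lookup_single)
    have kM: "Poly_Mapping.keys M \<subseteq> {1..n}"
      by (rule keys_sub) (use lM fsupp assms(1) in auto)
    have "mdeg M = sum (\<lambda>i. f i + (if i = 1 then e else 0)) {1..n}"
      using mdeg_sum[OF kM] lM by simp
    also have "\<dots> = sum f {1..n} + e" using assms(1) by (simp add: sum.distrib)
    finally have "mdeg M = d - 1 + e" using deg by simp
    then have dM: "int (mdeg M) = 2 * int n - int d + 2" using True assms(1,2) unfolding e_def by linarith
    have "(mpoly_of M :: 'a mpoly) \<notin> Knd n d"
      by (rule notKnd) (use True kM in \<open>auto simp: mon_in_def\<close>)
    then show ?thesis using kM dM unfolding mon_in_def M_def by blast
  next
    case False
    then have d3: "3 \<le> d" by simp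
    have dn: "d - 1 \<le> n"
    proof (rule ccontr)
      assume "\<not> d - 1 \<le> n"
      have s: "sum f {1..n} = sum f {1..<n} + f n" using assms(1) by (intro sum_last) simp
      have C: "sum f {1..<n} + min (f n) 1 \<le> n" using fC[of n] assms(1) unfolding Cn_def by simp
      have "f n \<le> 2" by (rule f2)
      have "f n = 2"
      proof (rule ccontr)
        assume "f n \<noteq> 2"
        then have "min (f n) 1 = f n" using \<open>f n \<le> 2\<close> by simp
        then show False using s C deg \<open>\<not> d - 1 \<le> n\<close> by linarith
      qed
      then have "d - 2 = n" using s C deg \<open>\<not> d - 1 \<le> n\<close> by simp
      then have "ends_in \<mu> (d - 2) 2" unfolding ends_in_def using \<open>f n = 2\<close> fsupp unfolding f_def by auto
      then show False using assms(5) by blast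
    qed
    define m where "m = d - 2"
    have m: "1 \<le> m" "Suc m = d - 1" "Suc m \<le> n" using d3 dn unfolding m_def by auto
    have Sm: "sum f {1..m} \<le> m"
    proof (rule ccontr)
      assume nS: "\<not> sum f {1..m} \<le> m"
      have sp: "sum f {1..n} = sum f {1..m} + sum f {Suc m..n}" using m by (intro split_sum) simp
      then have z0: "sum f {Suc m..n} = 0" using deg nS m(2) by linarith
      then have z: "\<forall>i\<in>{Suc m..n}. f i = 0" by simp
      have zz: "\<And>i. m < i \<Longrightarrow> f i = 0"
      proof -
        fix i assume "m < i"
        show "f i = 0"
        proof (cases "i \<le> n")
          case True then show ?thesis using z \<open>m < i\<close> by auto
        next
          case False then show ?thesis using fsupp by simp
        qed
      qed
      have s: "sum f {1..m} = sum f {1..<m} + f m" using m by (intro sum_last) simp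
      have C: "sum f {1..<m} + min (f m) 1 \<le> m" using fC[of m] m unfolding Cn_def by simp
      have "f m \<le> 2" by (rule f2)
      have "f m = 2"
      proof (rule ccontr)
        assume "f m \<noteq> 2"
        then have "min (f m) 1 = f m" using \<open>f m \<le> 2\<close> by simp
        then show False using s C nS by linarith
      qed
      then have "ends_in \<mu> m 2" unfolding ends_in_def using zz unfolding f_def by auto
      then show False using assms(5) unfolding m_def by blast
    qed
    define \<nu> where "\<nu> = (\<lambda>i. if i \<in> {1..m} then f i else 0)"
    have e1: "\<forall>i. \<nu> i \<le> 2" using f2 unfolding \<nu>_def by simp
    have e2: "\<forall>i. i \<notin> {1..m} \<longrightarrow> \<nu> i = 0" unfolding \<nu>_def by simp
    have e3: "\<forall>j\<in>{1..m}. Cn \<nu> j"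
    proof
      fix j assume j: "j \<in> {1..m}"
      have "Cn \<nu> j = Cn f j" by (rule Cn_cong) (use j in \<open>auto simp: \<nu>_def\<close>)
      then show "Cn \<nu> j" using fC[of j] j m by auto
    qed
    have e4: "sum \<nu> {1..m} \<le> m" using Sm unfolding \<nu>_def by simp
    obtain N where N: "\<forall>i. \<nu> i \<le> N i" "\<forall>i. N i \<le> 2" "\<forall>i. i \<notin> {1..m} \<longrightarrow> N i = 0"
        "\<forall>j\<in>{1..m}. Cn N j" "sum N {1..m} = m"
      using extend[OF e1 e2 e3 e4 order.refl] by blast
    define F where "F = (\<lambda>i. if i \<in> {1..m} then N i else if Suc m \<le> i \<and> i \<le> n then 2 else (0::nat))"
    have Fs: "\<And>i. i \<notin> {1..n} \<Longrightarrow> F i = 0" unfolding F_def using m by auto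
    define M where "M = Abs_poly_mapping F"
    have lM: "Poly_Mapping.lookup M = F" unfolding M_def by (rule lookup_Abs_fin[of n]) (use Fs in blast)
    have Fge: "\<And>i. f i \<le> F i"
    proof -
      fix i
      show "f i \<le> F i"
      proof (cases "i \<in> {1..m}")
        case True
        have "\<nu> i \<le> N i" using N(1) by blast
        then show ?thesis using True unfolding F_def \<nu>_def by simp
      next
        case False then show ?thesis using f2[of i] fsupp[of i] unfolding F_def by auto
      qed
    qed
    define m' where "m' = Abs_poly_mapping (\<lambda>i. F i - f i)"
    have lm': "Poly_Mapping.lookup m' = (\<lambda>i. F i - f i)" unfolding m'_def
      by (rule lookup_Abs_fin[of n]) (use Fs in simp)
    have Meq: "M = \<mu> + m'"
      by (rule poly_mapping_eqI) (simp add: lookup_add lM lm' Fge flip: f_def)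
    have kM: "Poly_Mapping.keys M \<subseteq> {1..n}" by (rule keys_sub) (use lM Fs in auto)
    have "mdeg M = sum F {1..n}" using mdeg_sum[OF kM] lM by simp
    also have "\<dots> = sum F {1..m} + sum F {Suc m..n}" using m by (intro split_sum) simp
    also have "sum F {1..m} = m" using N(5) unfolding F_def by simp
    also have "sum F {Suc m..n} = sum (\<lambda>_. 2) {Suc m..n}" unfolding F_def by (rule sum.cong) auto
    finally have "mdeg M = m + 2 * (n - m)" by simp
    then have dM: "int (mdeg M) = 2 * int n - int d + 2" using m d3 unfolding m_def by linarith
    have "(mpoly_of M :: 'a mpoly) \<notin> Knd n d"
    proof (rule notKnd)
      show "mon_in n M" using kM unfolding mon_in_def .
      show "\<forall>i. Poly_Mapping.lookup M i \<le> 2" using N(2) lM unfolding F_def by simp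
      fix j assume j: "2 \<le> j" "j \<le> d - 1"
      show "Cn (Poly_Mapping.lookup M) j"
      proof (cases "j = Suc m")
        case True
        have "sum F {1..<j} = sum F {1..m}" using True atLeastLessThanSuc_atLeastAtMost by simp
        also have "\<dots> = m" using N(5) unfolding F_def by simp
        finally show ?thesis unfolding Cn_def lM using True by simp
      next
        case False
        then have jm: "j \<in> {1..m}" using j m by auto
        have "Cn F j = Cn N j" by (rule Cn_cong) (use jm in \<open>auto simp: F_def\<close>)
        then show ?thesis using N(4) jm lM by simp
      qed
    qed
    then show ?thesis using kM dM Meq unfolding mon_in_def by blast
  qed
qed

end
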